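(* Let $\mathbb{F}\in\{\mathbb{R},\mathbb{C}\}$, $d=2$, $n\ge1$, let $a_{k,2}\in\mathbb{F}$ ($2\le k\le n$), and let $L_0,\dots,L_n\in\mathbb{F}[x_1,x_2]$ be defined by $L_0=1$, $L_1=x_1$ and, for $2\le k\le n$, $$L_k=\Psi_1(L_{k-1})+\Psi_2\Big(\Big(\sum_{t=2}^{k-1}a_{t,2}L_{k-t}\Big)_{i_1=0}\Big)+a_{k,2}x_2.$$ Let $\mathbf{z}_0\in\mathbb{F}^2$ and define $\mathbf{z}_0(h)=\mathbf{z}_0$, $\mathbf{z}_1(h)=\mathbf{z}_0+(h,0)$, and $$\mathbf{z}_i(h)=\mathbf{z}_0+\Big(ih,\ \sum_{j=2}^{i}i(i-1)\cdots(i-j+1)\,a_{j,2}h^j\Big),\qquad i=2,\dots,n.$$ With $A^{(m)}_k=(-1)^{m-k}\frac{1}{k!(m-k)!}$, for every function $f$ analytic at $\mathbf{z}_0$ and every $m=0,\dots,n$, $$(L_m(D)f)(\mathbf{z}_0)=\lim_{h\to0}\frac{1}{h^m}\sum_{i=0}^mA^{(m)}_i f(\mathbf{z}_i(h));$$ i.e. $\mathrm{span}\{\delta_{\mathbf{z}_0}\circ L_0(D),\dots,\delta_{\mathbf{z}_0}\circ L_n(D)\}=\lim_{h\to0}\mathrm{span}\{\delta_{\mathbf{z}_i(h)}:i=0,\dots,n\}$.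
   Context: $\Psi_j$ is the linear operator with $\Psi_j(x_1^{\alpha_1}x_2^{\alpha_2})=\frac{1}{\alpha_j+1}x_1^{\alpha_1}\cdots x_j^{\alpha_j+1}\cdots$ (raising the exponent of $x_j$ by one and dividing by the new exponent); $(M)_{i_1=0}$ is the sum of the terms of $M$ not containing $x_1$. For $p=\sum c_\alpha\mathbf{x}^\alpha$, $p(D)=\sum c_\alpha\partial^{|\alpha|}/\partial x_1^{\alpha_1}\partial x_2^{\alpha_2}$; $\delta_{\mathbf z}$ is evaluation at $\mathbf z$, and the limit of spans is understood via the pointwise limit formula. *)

theory Defs
  imports "HOL-Analysis.Analysis"
begin

text \<open>Polynomials in F[x1,x2] are represented by their coefficient functions
  (exponent pair (i,j) stands for the monomial x1^i x2^j).\<close>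
type_synonym 'a poly2 = "nat \<times> nat \<Rightarrow> 'a"

definition Psi1 :: "'a::field poly2 \<Rightarrow> 'a poly2" where
  "Psi1 p = (\<lambda>(i,j). if i = 0 then 0 else p (i - 1, j) / of_nat i)"

definition Psi2 :: "'a::field poly2 \<Rightarrow> 'a poly2" where
  "Psi2 p = (\<lambda>(i,j). if j = 0 then 0 else p (i, j - 1) / of_nat j)"

text \<open>(M)_{i1=0}: keep the terms not containing x1.\<close>
definition restr0 :: "'a::zero poly2 \<Rightarrow> 'a poly2" where
  "restr0 p = (\<lambda>(i,j). if i = 0 then p (i,j) else 0)"

definition mono2 :: "nat \<times> nat \<Rightarrow> 'a::{zero,one} poly2" where
  "mono2 e = (\<lambda>\<alpha>. if \<alpha> = e then 1 else 0)"

function Lpoly :: "(nat \<Rightarrow> 'a::field) \<Rightarrow> nat \<Rightarrow> 'a poly2" where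
  "Lpoly a 0 = mono2 (0,0)"
| "Lpoly a (Suc 0) = mono2 (1,0)"
| "Lpoly a (Suc (Suc k)) =
     (\<lambda>\<alpha>. Psi1 (Lpoly a (Suc k)) \<alpha>
        + Psi2 (restr0 (\<lambda>\<beta>. \<Sum>t\<in>{2..Suc k}. a t * Lpoly a (Suc (Suc k) - t) \<beta>)) \<alpha>
        + a (Suc (Suc k)) * mono2 (0,1) \<alpha>)"
  by pat_completeness auto
termination
  by (relation "Wellfounded.measure (\<lambda>(a,k). k)") auto

definition partial1 :: "('a::real_normed_field \<times> 'a \<Rightarrow> 'a) \<Rightarrow> 'a \<times> 'a \<Rightarrow> 'a" where
  "partial1 f = (\<lambda>(x,y). deriv (\<lambda>t. f (t, y)) x)"

definition partial2 :: "('a::real_normed_field \<times> 'a \<Rightarrow> 'a) \<Rightarrow> 'a \<times> 'a \<Rightarrow> 'a" where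
  "partial2 f = (\<lambda>(x,y). deriv (\<lambda>t. f (x, t)) y)"

definition pderiv2 :: "nat \<times> nat \<Rightarrow> ('a::real_normed_field \<times> 'a \<Rightarrow> 'a) \<Rightarrow> 'a \<times> 'a \<Rightarrow> 'a" where
  "pderiv2 e f = (partial1 ^^ fst e) ((partial2 ^^ snd e) f)"

text \<open>(p(D) f)(z) for a polynomial p (finite support).\<close>
definition polyD :: "'a::real_normed_field poly2 \<Rightarrow> ('a \<times> 'a \<Rightarrow> 'a) \<Rightarrow> 'a \<times> 'a \<Rightarrow> 'a" where
  "polyD p f z = (\<Sum>\<alpha>\<in>{\<alpha>. p \<alpha> \<noteq> 0}. p \<alpha> * pderiv2 \<alpha> f z)"

definition analytic2_at :: "('a::real_normed_field \<times> 'a \<Rightarrow> 'a) \<Rightarrow> 'a \<times> 'a \<Rightarrow> bool" where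
  "analytic2_at f z0 \<longleftrightarrow> (\<exists>r>0. \<exists>c :: nat \<times> nat \<Rightarrow> 'a. \<forall>x y.
     norm (x - fst z0) < r \<and> norm (y - snd z0) < r \<longrightarrow>
       (\<lambda>(i,j). c (i,j) * (x - fst z0) ^ i * (y - snd z0) ^ j) abs_summable_on UNIV \<and>
       ((\<lambda>(i,j). c (i,j) * (x - fst z0) ^ i * (y - snd z0) ^ j) has_sum f (x, y)) UNIV)"

definition znode :: "(nat \<Rightarrow> 'a::field) \<Rightarrow> 'a \<times> 'a \<Rightarrow> nat \<Rightarrow> 'a \<Rightarrow> 'a \<times> 'a" where
  "znode a z0 i h = (fst z0 + of_nat i * h,
      snd z0 + (\<Sum>j\<in>{2..i}. of_nat (\<Prod>l<j. i - l) * a j * h ^ j))"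

definition Acoef :: "nat \<Rightarrow> nat \<Rightarrow> 'a::field_char_0" where
  "Acoef m k = (-1) ^ (m - k) / (fact k * fact (m - k))"

end

theory Submission
  imports Defs "HOL-Computational_Algebra.Polynomial"
begin


definition Fd :: "nat \<Rightarrow> nat \<Rightarrow> int" where
  "Fd m n = (\<Sum>i\<le>m. (-1)^(m-i) * int (m choose i) * int i ^ n)"

lemma Fd_0: "Fd m 0 = (if m = 0 then 1 else 0)"
proof -
  have "Fd m 0 = (\<Sum>i\<le>m. int (m choose i) * 1 ^ i * (-1)^(m-i))"
    unfolding Fd_def by (intro sum.cong) auto
  also have "\<dots> = (1 + (-1)) ^ m" unfolding binomial_ring by simp
  finally show ?thesis by simp
qed

lemma Fd_rec: "Fd (Suc m) (Suc n) = int (Suc m) * (\<Sum>r\<le>n. int (n choose r) * Fd m r)"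
proof -
  have "Fd (Suc m) (Suc n) = (\<Sum>k\<le>m. (-1)^(Suc m - Suc k) * int (Suc m choose Suc k) * int (Suc k) ^ Suc n)"
    unfolding Fd_def by (subst sum.atMost_Suc_shift) simp
  also have "\<dots> = (\<Sum>k\<le>m. int (Suc m) * ((-1)^(m-k) * int (m choose k) * (int k + 1) ^ n))"
  proof (intro sum.cong refl)
    fix k assume "k \<in> {..m}"
    have e: "int (Suc k) * int (Suc m choose Suc k) = int (Suc m) * int (m choose k)"
      using Suc_times_binomial[of k m] by (metis of_nat_mult)
    have "(-1)^(Suc m - Suc k) * int (Suc m choose Suc k) * int (Suc k) ^ Suc n
       = (-1)^(m-k) * (int (Suc k) * int (Suc m choose Suc k)) * int (Suc k) ^ n"
      by (simp add: algebra_simps)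
    also have "\<dots> = int (Suc m) * ((-1)^(m-k) * int (m choose k) * (int k + 1) ^ n)"
      by (simp only: e) (simp add: algebra_simps)
    finally show "(-1)^(Suc m - Suc k) * int (Suc m choose Suc k) * int (Suc k) ^ Suc n
       = int (Suc m) * ((-1)^(m-k) * int (m choose k) * (int k + 1) ^ n)" .
  qed
  also have "\<dots> = int (Suc m) * (\<Sum>k\<le>m. (-1)^(m-k) * int (m choose k) * (\<Sum>r\<le>n. int (n choose r) * int k ^ r))"
    by (simp add: sum_distrib_left binomial_ring)
  also have "\<dots> = int (Suc m) * (\<Sum>k\<le>m. \<Sum>r\<le>n. int (n choose r) * ((-1)^(m-k) * int (m choose k) * int k ^ r))"
    by (simp add: sum_distrib_left algebra_simps)
  also have "\<dots> = int (Suc m) * (\<Sum>r\<le>n. int (n choose r) * Fd m r)"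
    unfolding Fd_def by (subst sum.swap) (simp add: sum_distrib_left)
  finally show ?thesis .
qed

lemma Fd_zero: "n < m \<Longrightarrow> Fd m n = 0"
proof (induction n arbitrary: m rule: less_induct)
  case (less n)
  show ?case
  proof (cases n)
    case 0 thus ?thesis using less.prems by (simp add: Fd_0)
  next
    case (Suc n')
    obtain m' where m: "m = Suc m'" using less.prems by (cases m) auto
    have "\<forall>r\<in>{..n'}. Fd m' r = 0"
      using less.IH less.prems Suc m by auto
    thus ?thesis by (simp add: m Suc Fd_rec)
  qed
qed

lemma Fd_diag: "Fd n n = fact n"
proof (induction n)
  case 0 then show ?case by (simp add: Fd_0)
next
  case (Suc n)
  have "(\<Sum>r\<le>n. int (n choose r) * Fd n r) = (\<Sum>r\<in>{n}. int (n choose r) * Fd n r)"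
    by (rule sum.mono_neutral_right) (auto simp: Fd_zero)
  thus ?case by (simp add: Fd_rec Suc.IH)
qed

lemma Acoef_sum:
  "(\<Sum>i\<le>m. Acoef m i * (of_nat i :: 'a::field_char_0) ^ n) = (if n < m then 0 else if n = m then 1 else of_int (Fd m n) / fact m)"
proof -
  have "(\<Sum>i\<le>m. Acoef m i * (of_nat i :: 'a) ^ n) = of_int (Fd m n) / fact m"
    unfolding Fd_def Acoef_def of_int_sum
    by (auto simp: sum_divide_distrib binomial_fact intro!: sum.cong)
  thus ?thesis using Fd_zero Fd_diag by simp
qed



definition PP :: "(nat \<Rightarrow> 'a::comm_ring_1) \<Rightarrow> nat \<Rightarrow> 'a poly" where
  "PP a N = (\<Sum>j\<in>{2..N}. monom (a j) j)"

definition GG :: "(nat \<Rightarrow> 'a::comm_ring_1) \<Rightarrow> nat \<Rightarrow> nat \<Rightarrow> nat \<Rightarrow> 'a" where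
  "GG a N k q = coeff (PP a N ^ q) k"

lemma coeff_PP: "coeff (PP a N) t = (if 2 \<le> t \<and> t \<le> N then a t else 0)"
  unfolding PP_def coeff_sum coeff_monom
  by (cases "2 \<le> t \<and> t \<le> N") (auto intro: sum.neutral)

lemma GG_0: "GG a N k 0 = (if k = 0 then 1 else 0)"
  by (simp add: GG_def)

lemma GG_Suc: "GG a N k (Suc q) = (\<Sum>t\<le>k. coeff (PP a N) t * GG a N (k - t) q)"
  by (simp add: GG_def coeff_mult)

lemma GG_small: "k < 2 * q \<Longrightarrow> GG a N k q = 0"
proof (induction q arbitrary: k)
  case 0 thus ?case by simp
next
  case (Suc q)
  have "\<forall>t\<in>{..k}. coeff (PP a N) t * GG a N (k - t) q = 0"
  proof
    fix t assume "t \<in> {..k}"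
    show "coeff (PP a N) t * GG a N (k - t) q = 0"
    proof (cases "t < 2")
      case True thus ?thesis by (simp add: coeff_PP)
    next
      case False thus ?thesis using Suc \<open>t \<in> {..k}\<close> by auto
    qed
  qed
  thus ?case by (simp add: GG_Suc)
qed

lemma GG_rec: "k \<le> N \<Longrightarrow> GG a N k (Suc q) = (\<Sum>t\<in>{2..k}. a t * GG a N (k - t) q)"
proof -
  assume k: "k \<le> N"
  have "GG a N k (Suc q) = (\<Sum>t\<in>{..k}. coeff (PP a N) t * GG a N (k - t) q)" by (simp add: GG_Suc)
  also have "\<dots> = (\<Sum>t\<in>{2..k}. coeff (PP a N) t * GG a N (k - t) q)"
    by (rule sum.mono_neutral_right) (auto simp: coeff_PP)
  also have "\<dots> = (\<Sum>t\<in>{2..k}. a t * GG a N (k - t) q)"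
    using k by (intro sum.cong) (auto simp: coeff_PP)
  finally show ?thesis .
qed

lemma Lpoly_GG:
  fixes a :: "nat \<Rightarrow> 'a::field_char_0"
  shows "k \<le> N \<Longrightarrow> fact p * fact q * Lpoly a k (p,q) = (if p \<le> k then GG a N (k - p) q else 0)"
proof (induction k arbitrary: p q rule: less_induct)
  case (less k)
  show ?case
  proof (cases k)
    case 0
    thus ?thesis by (cases q) (auto simp: mono2_def GG_0 GG_small)
  next
    case (Suc k1)
    show ?thesis
    proof (cases k1)
      case 0
      show ?thesis
      proof (cases p)
        case 0
        then show ?thesis using \<open>k = Suc k1\<close> \<open>k1 = 0\<close>
          by (cases q) (auto simp: mono2_def GG_0 GG_small)
      next
        case (Suc p1)
        then show ?thesis using \<open>k = Suc k1\<close> \<open>k1 = 0\<close>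
          by (cases q; cases p1) (auto simp: mono2_def GG_0 GG_small)
      qed
    next
      case (Suc k')
      have kk: "k = Suc (Suc k')" using \<open>k = Suc k1\<close> Suc by simp
      show ?thesis
      proof (cases p)
        case (Suc p')
        have IH: "fact p' * fact q * Lpoly a (Suc k') (p',q) = (if p' \<le> Suc k' then GG a N (Suc k' - p') q else 0)"
          using less.IH[of "Suc k'" p' q] less.prems kk by simp
        have "Lpoly a k (p,q) = Lpoly a (Suc k') (p',q) / of_nat (Suc p')"
          unfolding kk Lpoly.simps Psi1_def Psi2_def restr0_def mono2_def using Suc by simp
        moreover have nz: "(of_nat (Suc p') :: 'a) \<noteq> 0" by (rule of_nat_neq_0)
        moreover have "(fact p :: 'a) = of_nat (Suc p') * fact p'" using Suc by simp
        ultimately have "fact p * fact q * Lpoly a k (p,q) = fact p' * fact q * Lpoly a (Suc k') (p',q)"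
          by (simp del: of_nat_Suc)
        thus ?thesis using IH Suc kk by simp
      next
        case 0
        show ?thesis
        proof (cases q)
          case 0
          thus ?thesis using \<open>p = 0\<close> kk
            by (simp add: Lpoly.simps Psi1_def Psi2_def restr0_def mono2_def GG_0)
        next
          case (Suc q')
          have L: "Lpoly a k (p,q) = (\<Sum>t\<in>{2..Suc k'}. a t * Lpoly a (k - t) (0,q')) / of_nat (Suc q')
                  + (if q' = 0 then a k else 0)"
            unfolding kk Lpoly.simps Psi1_def Psi2_def restr0_def mono2_def using Suc \<open>p = 0\<close> by simp
          have IH: "\<And>t. t \<in> {2..Suc k'} \<Longrightarrow> fact q' * Lpoly a (k - t) (0,q') = GG a N (k - t) q'"
          proof -
            fix t assume t: "t \<in> {2..Suc k'}"
            hence "k - t < k" "k - t \<le> N" using kk less.prems by auto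
            from less.IH[OF this, of 0 q'] show "fact q' * Lpoly a (k - t) (0,q') = GG a N (k - t) q'" by simp
          qed
          have "fact p * fact q * Lpoly a k (p,q)
              = (\<Sum>t\<in>{2..Suc k'}. a t * (fact q' * Lpoly a (k - t) (0,q'))) + (if q' = 0 then a k else 0)"
          proof -
            define S where "S = (\<Sum>t\<in>{2..Suc k'}. a t * Lpoly a (k - t) (0,q'))"
            have nz: "(of_nat (Suc q') :: 'a) \<noteq> 0" by (rule of_nat_neq_0)
            have fq: "(fact q :: 'a) = of_nat (Suc q') * fact q'" using Suc by simp
            have "fact p * fact q * Lpoly a k (p,q) = fact q * (S / of_nat (Suc q')) + fact q * (if q' = 0 then a k else 0)"
              unfolding L S_def using \<open>p = 0\<close> by (simp add: algebra_simps)
            also have "fact q * (S / of_nat (Suc q')) = fact q' * S" using nz fq by (simp del: of_nat_Suc)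
            also have "fact q * (if q' = 0 then a k else 0) = (if q' = 0 then a k else 0)" using Suc by simp
            finally show ?thesis unfolding S_def by (simp add: sum_distrib_left algebra_simps)
          qed
          also have "\<dots> = (\<Sum>t\<in>{2..Suc k'}. a t * GG a N (k - t) q') + a k * GG a N (k - k) q'"
            using IH by (simp add: GG_0 GG_small)
          also have "\<dots> = (\<Sum>t\<in>{2..k}. a t * GG a N (k - t) q')"
            using kk by (simp add: atLeastAtMostSuc_conv)
          also have "\<dots> = GG a N k q"
            using GG_rec[of k N a q'] less.prems Suc by simp
          finally show ?thesis using \<open>p = 0\<close> by simp
        qed
      qed
    qed
  qed
qed




definition ccont :: "('b::real_normed_field \<Rightarrow> 'b poly) \<Rightarrow> bool" where
  "ccont \<Phi> \<longleftrightarrow> (\<forall>n. isCont (\<lambda>h. coeff (\<Phi> h) n) 0)"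

lemma ccont_const: "ccont (\<lambda>h. P)" by (simp add: ccont_def)

lemma ccont_add: "ccont \<Phi> \<Longrightarrow> ccont \<Psi> \<Longrightarrow> ccont (\<lambda>h. \<Phi> h + \<Psi> h)"
  by (simp add: ccont_def)

lemma ccont_mult: "ccont \<Phi> \<Longrightarrow> ccont \<Psi> \<Longrightarrow> ccont (\<lambda>h. \<Phi> h * \<Psi> h)"
  unfolding ccont_def coeff_mult by (intro allI isCont_sum ballI isCont_mult) auto

lemma ccont_power: "ccont \<Phi> \<Longrightarrow> ccont (\<lambda>h. \<Phi> h ^ q)"
  by (induction q) (auto intro: ccont_mult ccont_const)

lemma ccont_smult: "ccont \<Phi> \<Longrightarrow> ccont (\<lambda>h. smult c (\<Phi> h))"
  by (simp add: ccont_def)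

lemma ccont_sum: "(\<And>j. j \<in> A \<Longrightarrow> ccont (\<Phi> j)) \<Longrightarrow> ccont (\<lambda>h. \<Sum>j\<in>A. \<Phi> j h)"
  unfolding ccont_def coeff_sum by (intro allI isCont_sum ballI) auto

lemma ccont_prod: fixes k :: nat shows "(\<And>j. j < k \<Longrightarrow> ccont (\<Phi> j)) \<Longrightarrow> ccont (\<lambda>h. \<Prod>j<k. \<Phi> j h)"
  by (induction k) (auto intro: ccont_mult ccont_const)

lemma ccont_lin: "ccont (\<lambda>h::'a::real_normed_field. [:- (of_nat l * h), 1:])"
  unfolding ccont_def
proof
  fix n show "isCont (\<lambda>h::'a. coeff [:- (of_nat l * h), 1:] n) 0"
  proof (cases n)
    case 0 thus ?thesis by simp
  next
    case (Suc k) thus ?thesis by (cases k) auto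
  qed
qed

lemma natprod: "(\<Prod>l<j. (of_nat i - of_nat l :: 'a::comm_ring_1)) = of_nat (\<Prod>l<j. i - l)"
proof (cases "j \<le> i")
  case True
  thus ?thesis by (simp add: of_nat_prod of_nat_diff)
next
  case False
  hence "i \<in> {..<j}" by simp
  have "(\<Prod>l<j. (of_nat i - of_nat l :: 'a)) = 0"
    by (rule prod_zero) (use \<open>i \<in> {..<j}\<close> in auto)
  moreover have "(\<Prod>l<j. i - l) = (0::nat)"
    by (rule prod_zero) (use \<open>i \<in> {..<j}\<close> in auto)
  ultimately show ?thesis by (metis of_nat_0)
qed

definition WW :: "(nat \<Rightarrow> 'a::real_normed_field) \<Rightarrow> nat \<Rightarrow> nat \<Rightarrow> nat \<Rightarrow> 'a \<Rightarrow> 'a poly" where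
  "WW a m p q h = monom 1 p * (\<Sum>j\<in>{2..m}. smult (a j) (\<Prod>l<j. [:- (of_nat l * h), 1:])) ^ q"

definition YY :: "(nat \<Rightarrow> 'a::real_normed_field) \<Rightarrow> nat \<Rightarrow> 'a \<Rightarrow> 'a" where
  "YY a i h = (\<Sum>j\<in>{2..i}. of_nat (\<Prod>l<j. i - l) * a j * h ^ j)"

lemma WW_poly:
  assumes "i \<le> m"
  shows "poly (WW a m p q h) (of_nat i * h) = (of_nat i * h) ^ p * YY a i h ^ q"
proof -
  have "poly (\<Sum>j\<in>{2..m}. smult (a j) (\<Prod>l<j. [:- (of_nat l * h), 1:])) (of_nat i * h)
        = (\<Sum>j\<in>{2..m}. of_nat (\<Prod>l<j. i - l) * a j * h ^ j)"
  proof -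
    have "\<And>j. (\<Prod>l<j. - (of_nat l * h) + of_nat i * h) = h ^ j * of_nat (\<Prod>l<j. i - l)"
    proof -
      fix j
      have "(\<Prod>l<j. - (of_nat l * h) + of_nat i * h) = (\<Prod>l<j. h * (of_nat i - of_nat l))"
        by (intro prod.cong) (auto simp: algebra_simps)
      also have "\<dots> = h ^ j * (\<Prod>l<j. (of_nat i - of_nat l))" by (simp add: prod.distrib)
      finally show "(\<Prod>l<j. - (of_nat l * h) + of_nat i * h) = h ^ j * of_nat (\<Prod>l<j. i - l)"
        by (simp add: natprod)
    qed
    thus ?thesis by (simp add: poly_sum poly_prod algebra_simps)
  qed
  also have "\<dots> = YY a i h"
    unfolding YY_def
  proof (rule sum.mono_neutral_right)
    show "\<forall>j\<in>{2..m} - {2..i}. of_nat (\<Prod>l<j. i - l) * a j * h ^ j = 0"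
    proof
      fix j assume "j \<in> {2..m} - {2..i}"
      hence "i \<in> {..<j}" by auto
      hence "(\<Prod>l<j. i - l) = 0" by (auto intro!: prod_zero)
      thus "of_nat (\<Prod>l<j. i - l) * a j * h ^ j = 0" by simp
    qed
  qed (use assms in auto)
  finally show ?thesis unfolding WW_def by (simp add: poly_monom)
qed

lemma WW_degree: "degree (WW a m p q h) \<le> p + m * q"
proof -
  have "degree (\<Sum>j\<in>{2..m}. smult (a j) (\<Prod>l<j. [:- (of_nat l * h), 1:])) \<le> m"
  proof (rule degree_sum_le)
    fix j assume j: "j \<in> {2..m}"
    have "degree (smult (a j) (\<Prod>l<j. [:- (of_nat l * h), 1:])) \<le> degree (\<Prod>l<j. [:- (of_nat l * h), 1:])"
      by (rule degree_smult_le)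
    also have "\<dots> \<le> (\<Sum>l<j. degree [:- (of_nat l * h), 1:])" using degree_prod_sum_le[of "{..<j}" "\<lambda>l. [:- (of_nat l * h), 1:]"] by (simp add: o_def)
    also have "\<dots> = j" by simp
    finally show "degree (smult (a j) (\<Prod>l<j. [:- (of_nat l * h), 1:])) \<le> m" using j by simp
  qed simp
  hence "degree ((\<Sum>j\<in>{2..m}. smult (a j) (\<Prod>l<j. [:- (of_nat l * h), 1:])) ^ q) \<le> m * q"
    by (meson degree_power_le le_trans mult_le_mono1)
  moreover have "degree (monom (1::'a) p) \<le> p" by (rule degree_monom_le)
  ultimately show ?thesis unfolding WW_def by (meson add_le_mono degree_mult_le le_trans)
qed

lemma WW_ccont: "ccont (WW a m p q)"
  unfolding WW_def[abs_def]
  by (intro ccont_mult ccont_const ccont_power ccont_sum ccont_smult ccont_prod ccont_lin)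

lemma WW_0: "WW a m p q 0 = monom 1 p * PP a m ^ q"
proof -
  have "\<And>j. (\<Prod>l<j. [:- (of_nat l * 0), 1::'a:]) = monom 1 j"
    by (simp add: monom_altdef)
  thus ?thesis unfolding WW_def PP_def by (simp add: smult_monom)
qed

lemma node_limit:
  fixes a :: "nat \<Rightarrow> 'a::real_normed_field"
  shows "((\<lambda>h. (1 / h ^ m) * (\<Sum>i\<le>m. Acoef m i * ((of_nat i * h) ^ p * YY a i h ^ q)))
          \<longlongrightarrow> (if p \<le> m then GG a m (m - p) q else 0)) (at 0)"
proof -
  define D where "D = max (p + m * q) m"
  define Acs where "Acs n = (\<Sum>i\<le>m. Acoef m i * (of_nat i :: 'a) ^ n)" for n
  have Acs: "Acs n = (if n < m then 0 else if n = m then 1 else of_int (Fd m n) / fact m)" for n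
    unfolding Acs_def by (rule Acoef_sum)
  have polyD: "poly (WW a m p q h) x = (\<Sum>n\<le>D. coeff (WW a m p q h) n * x ^ n)" for h x
  proof -
    have "poly (WW a m p q h) x = (\<Sum>n\<le>degree (WW a m p q h). coeff (WW a m p q h) n * x ^ n)"
      by (rule poly_altdef)
    also have "\<dots> = (\<Sum>n\<le>D. coeff (WW a m p q h) n * x ^ n)"
      using WW_degree[of a m p q h] unfolding D_def
      by (intro sum.mono_neutral_left) (auto simp: coeff_eq_0)
    finally show ?thesis .
  qed
  have eq: "(1 / h ^ m) * (\<Sum>i\<le>m. Acoef m i * ((of_nat i * h) ^ p * YY a i h ^ q))
        = (\<Sum>n\<le>D. coeff (WW a m p q h) n * h ^ (n - m) * Acs n)" if "h \<noteq> 0" for h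
  proof -
    have "(\<Sum>i\<le>m. Acoef m i * ((of_nat i * h) ^ p * YY a i h ^ q))
        = (\<Sum>i\<le>m. Acoef m i * poly (WW a m p q h) (of_nat i * h))"
      by (intro sum.cong refl) (simp add: WW_poly)
    also have "\<dots> = (\<Sum>i\<le>m. \<Sum>n\<le>D. coeff (WW a m p q h) n * h ^ n * (Acoef m i * of_nat i ^ n))"
      by (simp add: polyD sum_distrib_left power_mult_distrib algebra_simps)
    also have "\<dots> = (\<Sum>n\<le>D. coeff (WW a m p q h) n * h ^ n * Acs n)"
      unfolding Acs_def by (subst sum.swap) (simp add: sum_distrib_left)
    finally have "(1 / h ^ m) * (\<Sum>i\<le>m. Acoef m i * ((of_nat i * h) ^ p * YY a i h ^ q))
        = (\<Sum>n\<le>D. (1 / h ^ m) * (coeff (WW a m p q h) n * h ^ n * Acs n))"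
      by (simp add: sum_distrib_left)
    also have "\<dots> = (\<Sum>n\<le>D. coeff (WW a m p q h) n * h ^ (n - m) * Acs n)"
    proof (intro sum.cong refl)
      fix n
      show "(1 / h ^ m) * (coeff (WW a m p q h) n * h ^ n * Acs n) = coeff (WW a m p q h) n * h ^ (n - m) * Acs n"
      proof (cases "n < m")
        case True thus ?thesis by (simp add: Acs)
      next
        case False
        hence "h ^ n = h ^ m * h ^ (n - m)" by (simp flip: power_add)
        thus ?thesis using that by simp
      qed
    qed
    finally show ?thesis .
  qed
  have lim: "((\<lambda>h. \<Sum>n\<le>D. coeff (WW a m p q h) n * h ^ (n - m) * Acs n)
       \<longlongrightarrow> (\<Sum>n\<le>D. coeff (WW a m p q 0) n * 0 ^ (n - m) * Acs n)) (at 0)"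
  proof -
    have "isCont (\<lambda>h. \<Sum>n\<le>D. coeff (WW a m p q h) n * h ^ (n - m) * Acs n) 0"
      using WW_ccont[of a m p q] unfolding ccont_def by simp
    thus ?thesis by (simp add: isCont_def)
  qed
  have "(\<Sum>n\<le>D. coeff (WW a m p q 0) n * 0 ^ (n - m) * Acs n) = (\<Sum>n\<in>{m}. coeff (WW a m p q 0) n * 0 ^ (n - m) * Acs n)"
    by (rule sum.mono_neutral_right) (auto simp: D_def Acs)
  also have "\<dots> = coeff (WW a m p q 0) m" by (simp add: Acs)
  also have "\<dots> = (if p \<le> m then GG a m (m - p) q else 0)"
    by (simp add: WW_0 coeff_monom_mult GG_def)
  finally have val: "(\<Sum>n\<le>D. coeff (WW a m p q 0) n * 0 ^ (n - m) * Acs n) = (if p \<le> m then GG a m (m - p) q else 0)" .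
  have ev: "\<forall>\<^sub>F h in at 0. (\<Sum>n\<le>D. coeff (WW a m p q h) n * h ^ (n - m) * Acs n)
      = (1 / h ^ m) * (\<Sum>i\<le>m. Acoef m i * ((of_nat i * h) ^ p * YY a i h ^ q))"
    unfolding eventually_at_filter
    by (intro always_eventually allI impI) (rule eq[symmetric])
  show ?thesis
    using Lim_transform_eventually[OF lim ev] unfolding val .
qed




lemma diffs_iter: "fact n * (diffs ^^ k) b n = fact (n + k) * (b (n + k) :: 'a::{real_normed_field})"
proof (induction k arbitrary: n)
  case 0 thus ?case by simp
next
  case (Suc k)
  have "fact n * (diffs ^^ Suc k) b n = fact n * of_nat (Suc n) * (diffs ^^ k) b (Suc n)"
    by (simp add: diffs_def)
  also have "fact n * of_nat (Suc n) = (fact (Suc n) :: 'a)" by (simp add: algebra_simps)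
  also have "fact (Suc n) * (diffs ^^ k) b (Suc n) = fact (Suc n + k) * b (Suc n + k)" by (rule Suc.IH)
  finally show ?case by simp
qed

lemma deriv_iter_powser:
  fixes g :: "'a::{real_normed_field,banach} \<Rightarrow> 'a" and b :: "nat \<Rightarrow> 'a"
  assumes "\<And>s. norm (s - s0) < R \<Longrightarrow> (\<lambda>n. b n * (s - s0) ^ n) sums g s"
  shows "norm (s - s0) < R \<Longrightarrow> (\<lambda>n. (diffs ^^ k) b n * (s - s0) ^ n) sums (deriv ^^ k) g s"
proof (induction k arbitrary: s)
  case 0 thus ?case using assms by simp
next
  case (Suc k)
  define d where "d = (diffs ^^ k) b"
  have sm: "\<And>z. norm z < R \<Longrightarrow> summable (\<lambda>n. d n * z ^ n)"
  proof -
    fix z :: 'a assume "norm z < R"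
    hence "norm ((z + s0) - s0) < R" by simp
    from Suc.IH[OF this] show "summable (\<lambda>n. d n * z ^ n)" unfolding d_def by (simp add: sums_summable)
  qed
  have eqS: "\<And>t. t \<in> ball s0 R \<Longrightarrow> (\<lambda>t. \<Sum>n. d n * (t - s0) ^ n) t = (deriv ^^ k) g t"
  proof -
    fix t assume "t \<in> ball s0 R"
    hence "norm (t - s0) < R" by (simp add: dist_norm norm_minus_commute)
    from Suc.IH[OF this] show "(\<lambda>t. \<Sum>n. d n * (t - s0) ^ n) t = (deriv ^^ k) g t"
      unfolding d_def by (simp add: sums_iff)
  qed
  have D1: "((\<lambda>z. \<Sum>n. d n * z ^ n) has_field_derivative (\<Sum>n. diffs d n * (s - s0) ^ n)) (at (s - s0))"
    by (rule termdiffs_strong'[OF sm Suc.prems])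
  have D2: "((\<lambda>t. \<Sum>n. d n * (t - s0) ^ n) has_field_derivative (\<Sum>n. diffs d n * (s - s0) ^ n)) (at s)"
  proof -
    have "((\<lambda>t. t - s0) has_field_derivative 1) (at s)" by (auto intro!: derivative_eq_intros)
    from DERIV_chain2[where f="\<lambda>z. \<Sum>n. d n * z ^ n" and g="\<lambda>t. t - s0" and x=s, OF D1 this]
    show ?thesis by simp
  qed
  have D3: "((deriv ^^ k) g has_field_derivative (\<Sum>n. diffs d n * (s - s0) ^ n)) (at s)"
    by (rule has_field_derivative_transform_within_open[OF D2 open_ball, of s0 R])
       (use Suc.prems eqS in \<open>auto simp: dist_norm norm_minus_commute\<close>)
  have "(deriv ^^ Suc k) g s = (\<Sum>n. diffs d n * (s - s0) ^ n)"
    using DERIV_imp_deriv[OF D3] by simp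
  moreover have "summable (\<lambda>n. diffs d n * (s - s0) ^ n)"
    by (rule termdiff_converges[OF Suc.prems sm])
  ultimately show ?case unfolding d_def by (simp add: summable_sums)
qed

lemma deriv_iter_powser0:
  fixes g :: "'a::{real_normed_field,banach} \<Rightarrow> 'a" and b :: "nat \<Rightarrow> 'a"
  assumes "R > 0" "\<And>s. norm (s - s0) < R \<Longrightarrow> (\<lambda>n. b n * (s - s0) ^ n) sums g s"
  shows "(deriv ^^ k) g s0 = fact k * b k"
proof -
  have "(\<lambda>n. (diffs ^^ k) b n * (s0 - s0) ^ n) sums (deriv ^^ k) g s0"
    by (rule deriv_iter_powser[where R=R]) (use assms in auto)
  hence "(deriv ^^ k) g s0 = (diffs ^^ k) b 0"
    using powser_sums_zero[of "(diffs ^^ k) b"] by (simp add: sums_unique2)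
  also have "\<dots> = fact k * b k" using diffs_iter[of 0 k b] by simp
  finally show ?thesis .
qed

lemma partial2_iter: "(partial2 ^^ q) f (x, y) = (deriv ^^ q) (\<lambda>s. f (x, s)) y"
proof (induction q arbitrary: y)
  case 0 thus ?case by simp
next
  case (Suc q)
  have "(partial2 ^^ Suc q) f (x, y) = deriv (\<lambda>t. (partial2 ^^ q) f (x, t)) y"
    by (simp add: partial2_def)
  also have "(\<lambda>t. (partial2 ^^ q) f (x, t)) = (deriv ^^ q) (\<lambda>s. f (x, s))"
    using Suc.IH by auto
  finally show ?case by simp
qed

lemma partial1_iter: "(partial1 ^^ p) f (x, y) = (deriv ^^ p) (\<lambda>t. f (t, y)) x"
proof (induction p arbitrary: x)
  case 0 thus ?case by simp
next
  case (Suc p)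
  have "(partial1 ^^ Suc p) f (x, y) = deriv (\<lambda>t. (partial1 ^^ p) f (t, y)) x"
    by (simp add: partial1_def)
  also have "(\<lambda>t. (partial1 ^^ p) f (t, y)) = (deriv ^^ p) (\<lambda>t. f (t, y))"
    using Suc.IH by auto
  finally show ?case by simp
qed




locale an2 =
  fixes f :: "'a::{real_normed_field,banach} \<times> 'a \<Rightarrow> 'a" and x0 y0 :: 'a and r :: real
    and c :: "nat \<times> nat \<Rightarrow> 'a"
  assumes r: "r > 0"
  assumes H: "\<forall>x y. norm (x - x0) < r \<and> norm (y - y0) < r \<longrightarrow>
       (\<lambda>(i,j). c (i,j) * (x - x0) ^ i * (y - y0) ^ j) abs_summable_on UNIV \<and>
       ((\<lambda>(i,j). c (i,j) * (x - x0) ^ i * (y - y0) ^ j) has_sum f (x, y)) UNIV"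
begin

definition phi where "phi x y = (\<lambda>(i,j). c (i,j) * (x - x0) ^ i * (y - y0) ^ j)"

lemma phi_abs: "norm (x - x0) < r \<Longrightarrow> norm (y - y0) < r \<Longrightarrow> phi x y abs_summable_on UNIV"
  using H unfolding phi_def by blast

lemma phi_sum: "norm (x - x0) < r \<Longrightarrow> norm (y - y0) < r \<Longrightarrow> (phi x y has_sum f (x, y)) UNIV"
  using H unfolding phi_def by blast

lemma phi_summable: "norm (x - x0) < r \<Longrightarrow> norm (y - y0) < r \<Longrightarrow> phi x y summable_on UNIV"
  using phi_sum summable_on_def by blast

lemma slice_summable:
  assumes "norm (x - x0) < r" "norm (y - y0) < r"
  shows "(\<lambda>i. c (i,j) * (x - x0) ^ i * (y - y0) ^ j) summable_on UNIV"
proof -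
  have "phi x y summable_on ((\<lambda>i. (i,j)) ` UNIV)"
    by (rule summable_on_subset_banach[OF phi_summable[OF assms]]) auto
  hence "(phi x y \<circ> (\<lambda>i. (i,j))) summable_on UNIV"
    by (subst (asm) summable_on_reindex) (auto simp: inj_on_def)
  thus ?thesis by (simp add: phi_def o_def)
qed

definition BB where "BB t j = infsum (\<lambda>i. c (i,j) * (t - x0) ^ i) UNIV"

lemma row_summable:
  assumes "norm (t - x0) < r"
  shows "(\<lambda>i. c (i,j) * (t - x0) ^ i) summable_on UNIV"
proof -
  define \<rho> where "\<rho> = (of_real (r/2) :: 'a)"
  have n\<rho>: "norm ((y0 + \<rho>) - y0) < r" using r by (simp add: \<rho>_def)
  have nz: "\<rho> ^ j \<noteq> 0" using r by (simp add: \<rho>_def)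
  have "(\<lambda>i. c (i,j) * (t - x0) ^ i * \<rho> ^ j) summable_on UNIV"
    using slice_summable[OF assms n\<rho>, of j] by simp
  thus ?thesis using summable_on_cmult_left'[OF nz, of "\<lambda>i. c (i,j) * (t - x0) ^ i" UNIV] by simp
qed

lemma row_sums:
  assumes "norm (t - x0) < r"
  shows "(\<lambda>i. c (i,j) * (t - x0) ^ i) sums BB t j"
  unfolding BB_def by (rule has_sum_imp_sums) (rule has_sum_infsum[OF row_summable[OF assms]])

lemma col_sums:
  assumes "norm (t - x0) < r" "norm (y - y0) < r"
  shows "(\<lambda>j. BB t j * (y - y0) ^ j) sums f (t, y)"
proof -
  have "((\<lambda>(j,i). phi t y (i,j)) has_sum f (t, y)) (UNIV \<times> UNIV)"
    using phi_sum[OF assms] by (subst has_sum_swap[symmetric]) simp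
  hence "((\<lambda>(j,i). phi t y (i,j)) has_sum f (t, y)) (Sigma UNIV (\<lambda>_. UNIV))" by simp
  moreover have "((\<lambda>i. (\<lambda>(j,i). phi t y (i,j)) (j, i)) has_sum (BB t j * (y - y0) ^ j)) UNIV" for j
  proof -
    have "((\<lambda>i. c (i,j) * (t - x0) ^ i * (y - y0) ^ j) has_sum (BB t j * (y - y0) ^ j)) UNIV"
      unfolding BB_def by (rule has_sum_cmult_left) (rule has_sum_infsum[OF row_summable[OF assms(1)]])
    thus ?thesis by (simp add: phi_def)
  qed
  ultimately have "((\<lambda>j. BB t j * (y - y0) ^ j) has_sum f (t, y)) UNIV"
    by (rule has_sum_SigmaD)
  thus ?thesis by (rule has_sum_imp_sums)
qed

lemma pderiv_coeff: "pderiv2 (p,q) f (x0, y0) = fact p * fact q * c (p,q)"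
proof -
  have inner: "(deriv ^^ q) (\<lambda>s. f (t, s)) y0 = fact q * BB t q" if "norm (t - x0) < r" for t
    by (rule deriv_iter_powser0[OF r]) (rule col_sums[OF that])
  have "pderiv2 (p,q) f (x0, y0) = (deriv ^^ p) (\<lambda>t. (deriv ^^ q) (\<lambda>s. f (t, s)) y0) x0"
    by (simp add: pderiv2_def partial1_iter partial2_iter)
  also have "\<dots> = fact p * (fact q * c (p,q))"
  proof (rule deriv_iter_powser0[OF r])
    fix t assume t: "norm (t - x0) < r"
    have "(\<lambda>i. fact q * (c (i,q) * (t - x0) ^ i)) sums (fact q * BB t q)"
      by (rule sums_mult) (rule row_sums[OF t])
    thus "(\<lambda>i. fact q * c (i,q) * (t - x0) ^ i) sums (deriv ^^ q) (\<lambda>s. f (t, s)) y0"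
      using inner[OF t] by (simp add: mult.assoc)
  qed
  finally show ?thesis by simp
qed

definition SS :: "nat \<Rightarrow> (nat \<times> nat) set" where "SS m = {(i,j). i + j \<le> m}"

lemma finite_SS: "finite (SS m)"
proof -
  have "SS m \<subseteq> {..m} \<times> {..m}" by (auto simp: SS_def)
  thus ?thesis by (rule finite_subset) simp
qed

lemma rem_bound:
  obtains K s where "K \<ge> 0" "s > 0" "s < r"
    "\<And>x y \<delta>. 0 \<le> \<delta> \<Longrightarrow> \<delta> \<le> s \<Longrightarrow> norm (x - x0) \<le> \<delta> \<Longrightarrow> norm (y - y0) \<le> \<delta> \<Longrightarrow>
       norm (f (x, y) - sum (phi x y) (SS m)) \<le> K * \<delta> ^ (m + 1)"
proof -
  define s where "s = r / 2"
  have s: "s > 0" "s < r" using r by (auto simp: s_def)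
  define g where "g = (\<lambda>(i,j). norm (c (i,j)) * s ^ (i + j))"
  have gnn: "\<And>\<alpha>. g \<alpha> \<ge> 0" using s by (auto simp: g_def)
  have gsum: "g summable_on UNIV"
  proof -
    have "norm ((x0 + of_real s) - x0) < r" "norm ((y0 + of_real s) - y0) < r" using s by auto
    from phi_abs[OF this] have "(\<lambda>\<alpha>. norm (phi (x0 + of_real s) (y0 + of_real s) \<alpha>)) summable_on UNIV" .
    moreover have "\<And>\<alpha>. norm (phi (x0 + of_real s) (y0 + of_real s) \<alpha>) = g \<alpha>"
      using s by (auto simp: phi_def g_def norm_mult norm_power power_add)
    ultimately show ?thesis by simp
  qed
  define Kc where "Kc = infsum g UNIV"
  have Kc: "Kc \<ge> 0" unfolding Kc_def by (rule infsum_nonneg) (simp add: gnn)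
  define K where "K = Kc / s ^ (m + 1)"
  show ?thesis
  proof (rule that[of K s])
    show "K \<ge> 0" using Kc s by (simp add: K_def)
    show "s > 0" "s < r" using s by auto
    fix x y \<delta> assume d: "0 \<le> \<delta>" "\<delta> \<le> s" "norm (x - x0) \<le> \<delta>" "norm (y - y0) \<le> \<delta>"
    have xr: "norm (x - x0) < r" "norm (y - y0) < r" using d s by auto
    have hs1: "(phi x y has_sum (f (x,y) - sum (phi x y) (SS m))) (UNIV - SS m)"
      by (rule has_sum_Diff[OF phi_sum[OF xr]]) (auto simp: finite_SS)
    have ns: "(\<lambda>\<alpha>. norm (phi x y \<alpha>)) summable_on (UNIV - SS m)"
      by (rule summable_on_subset_banach[OF phi_abs[OF xr]]) auto
    have b1: "norm (f (x,y) - sum (phi x y) (SS m)) \<le> infsum (\<lambda>\<alpha>. norm (phi x y \<alpha>)) (UNIV - SS m)"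
      by (rule norm_has_sum_bound[OF has_sum_infsum[OF ns] hs1])
    define e where "e = (\<delta> / s) ^ (m + 1)"
    have e: "e \<ge> 0" using d s by (simp add: e_def)
    have gs2: "g summable_on (UNIV - SS m)" by (rule summable_on_subset_banach[OF gsum]) auto
    have pw: "norm (phi x y \<alpha>) \<le> g \<alpha> * e" if "\<alpha> \<in> UNIV - SS m" for \<alpha>
    proof -
      obtain i j where a: "\<alpha> = (i,j)" by (cases \<alpha>)
      have ij: "i + j \<ge> m + 1" using that a by (auto simp: SS_def)
      have "norm (phi x y \<alpha>) = norm (c (i,j)) * (norm (x - x0) ^ i * norm (y - y0) ^ j)"
        by (simp add: a phi_def norm_mult norm_power)
      also have "\<dots> \<le> norm (c (i,j)) * (\<delta> ^ i * \<delta> ^ j)"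
        using d by (intro mult_left_mono mult_mono power_mono) auto
      also have "\<delta> ^ i * \<delta> ^ j = s ^ (i + j) * (\<delta> / s) ^ (i + j)"
        using s by (simp add: power_add power_divide)
      also have "(\<delta> / s) ^ (i + j) \<le> e"
        unfolding e_def using d s ij by (intro power_decreasing) auto
      hence "norm (c (i,j)) * (s ^ (i + j) * (\<delta> / s) ^ (i + j)) \<le> norm (c (i,j)) * (s ^ (i + j) * e)"
        using s by (intro mult_left_mono) auto
      finally show ?thesis by (simp add: a g_def)
    qed
    have "infsum (\<lambda>\<alpha>. norm (phi x y \<alpha>)) (UNIV - SS m) \<le> infsum (\<lambda>\<alpha>. g \<alpha> * e) (UNIV - SS m)"
      by (rule infsum_mono[OF ns summable_on_cmult_left[OF gs2] pw])
    also have "\<dots> = infsum g (UNIV - SS m) * e" by (rule infsum_cmult_left') 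
    also have "infsum g (UNIV - SS m) \<le> Kc"
      unfolding Kc_def by (rule infsum_mono_neutral[OF gs2 gsum]) (auto simp: gnn)
    hence "infsum g (UNIV - SS m) * e \<le> Kc * e" using e by (rule mult_right_mono)
    also have "Kc * e = K * \<delta> ^ (m + 1)"
      using s by (simp add: K_def e_def power_divide)
    finally show "norm (f (x, y) - sum (phi x y) (SS m)) \<le> K * \<delta> ^ (m + 1)" using b1 by simp
  qed
qed

end



context an2 begin

lemma phi_fs: "phi x y \<alpha> = c \<alpha> * (x - x0) ^ fst \<alpha> * (y - y0) ^ snd \<alpha>"
  by (cases \<alpha>) (simp add: phi_def)

lemma YY_bound:
  assumes "norm h \<le> 1"
  shows "norm (YY a i h) \<le> (\<Sum>j\<in>{2..i}. norm (of_nat (\<Prod>l<j. i - l) * a j)) * norm h"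
proof -
  have "norm (YY a i h) \<le> (\<Sum>j\<in>{2..i}. norm (of_nat (\<Prod>l<j. i - l) * a j * h ^ j))"
    unfolding YY_def by (rule norm_sum)
  also have "\<dots> \<le> (\<Sum>j\<in>{2..i}. norm (of_nat (\<Prod>l<j. i - l) * a j) * norm h)"
  proof (rule sum_mono)
    fix j assume j: "j \<in> {2..i}"
    have "norm h ^ j \<le> norm h ^ 1" using assms j by (intro power_decreasing) auto
    thus "norm (of_nat (\<Prod>l<j. i - l) * a j * h ^ j) \<le> norm (of_nat (\<Prod>l<j. i - l) * a j) * norm h"
      by (simp add: norm_mult norm_power mult_left_mono)
  qed
  finally show ?thesis by (simp add: sum_distrib_right)
qed

lemma main_limit:
  fixes a :: "nat \<Rightarrow> 'a"
  shows "((\<lambda>h. (1 / h ^ m) * (\<Sum>i\<le>m. Acoef m i * f (znode a (x0, y0) i h)))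
           \<longlongrightarrow> polyD (Lpoly a m) f (x0, y0)) (at 0)"
proof -
  obtain K s where K: "K \<ge> 0" "s > 0" "s < r" and
    KB: "\<And>x y \<delta>. 0 \<le> \<delta> \<Longrightarrow> \<delta> \<le> s \<Longrightarrow> norm (x - x0) \<le> \<delta> \<Longrightarrow> norm (y - y0) \<le> \<delta> \<Longrightarrow>
       norm (f (x, y) - sum (phi x y) (SS m)) \<le> K * \<delta> ^ (m + 1)"
    using rem_bound by blast
  define X where "X i h = x0 + of_nat i * h" for i h
  define Y where "Y i h = y0 + YY a i h" for i h
  have zn: "znode a (x0, y0) i h = (X i h, Y i h)" for i h
    by (simp add: znode_def X_def Y_def YY_def)
  define Rm where "Rm i h = f (X i h, Y i h) - sum (phi (X i h) (Y i h)) (SS m)" for i h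
  define Lim where "Lim = (\<Sum>\<alpha>\<in>SS m. c \<alpha> * (if fst \<alpha> \<le> m then GG a m (m - fst \<alpha>) (snd \<alpha>) else 0))"
  define T where "T h = (\<Sum>\<alpha>\<in>SS m. c \<alpha> * ((1 / h ^ m) * (\<Sum>i\<le>m. Acoef m i * ((of_nat i * h) ^ fst \<alpha> * YY a i h ^ snd \<alpha>))))" for h
  define E where "E h = (1 / h ^ m) * (\<Sum>i\<le>m. Acoef m i * Rm i h)" for h
  have split: "(1 / h ^ m) * (\<Sum>i\<le>m. Acoef m i * f (znode a (x0, y0) i h)) = T h + E h" for h
  proof -
    have "(\<Sum>i\<le>m. Acoef m i * f (znode a (x0, y0) i h))
        = (\<Sum>i\<le>m. Acoef m i * sum (phi (X i h) (Y i h)) (SS m)) + (\<Sum>i\<le>m. Acoef m i * Rm i h)"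
      by (simp add: zn Rm_def algebra_simps sum.distrib[symmetric])
    also have "(\<Sum>i\<le>m. Acoef m i * sum (phi (X i h) (Y i h)) (SS m))
        = (\<Sum>\<alpha>\<in>SS m. c \<alpha> * (\<Sum>i\<le>m. Acoef m i * ((of_nat i * h) ^ fst \<alpha> * YY a i h ^ snd \<alpha>)))"
      by (simp add: phi_fs X_def Y_def sum_distrib_left algebra_simps) (rule sum.swap)
    finally show ?thesis by (simp add: T_def E_def sum_distrib_left algebra_simps)
  qed
  have Tlim: "(T \<longlongrightarrow> Lim) (at 0)"
    unfolding T_def Lim_def
    by (intro tendsto_sum tendsto_mult tendsto_const node_limit)
  define Cy where "Cy = (\<Sum>i\<le>m. \<Sum>j\<in>{2..i}. norm (of_nat (\<Prod>l<j. i - l) * a j))"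
  have Cy: "Cy \<ge> 0" by (simp add: Cy_def sum_nonneg)
  define B where "B = real m + Cy + 1"
  have B: "B \<ge> 1" using Cy by (simp add: B_def)
  define CA where "CA = (\<Sum>i\<le>m. norm (Acoef m i :: 'a))"
  define d where "d = min 1 (s / B)"
  have d: "d > 0" using K B by (simp add: d_def)
  have Ebound: "norm (E h) \<le> CA * K * B ^ (m + 1) * norm h" if h: "h \<noteq> 0" "norm h < d" for h
  proof -
    have h1: "norm h \<le> 1" using h by (simp add: d_def)
    have hB: "B * norm h \<le> s" using h B by (simp add: d_def field_simps)
    have Ri: "norm (Rm i h) \<le> K * (B * norm h) ^ (m + 1)" if i: "i \<le> m" for i
    proof (unfold Rm_def, rule KB)
      show "0 \<le> B * norm h" using B by simp
      show "B * norm h \<le> s" by (rule hB)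
      have "norm (X i h - x0) = real i * norm h" by (simp add: X_def norm_mult)
      also have "\<dots> \<le> B * norm h" using i Cy by (intro mult_right_mono) (auto simp: B_def)
      finally show "norm (X i h - x0) \<le> B * norm h" .
      have "norm (Y i h - y0) \<le> (\<Sum>j\<in>{2..i}. norm (of_nat (\<Prod>l<j. i - l) * a j)) * norm h"
        unfolding Y_def using YY_bound[OF h1] by simp
      also have "\<dots> \<le> Cy * norm h"
        unfolding Cy_def using i
        by (intro mult_right_mono member_le_sum[where f="\<lambda>i. \<Sum>j\<in>{2..i}. norm (of_nat (\<Prod>l<j. i - l) * a j)"]) (auto intro: sum_nonneg)
      also have "\<dots> \<le> B * norm h" by (intro mult_right_mono) (auto simp: B_def)
      finally show "norm (Y i h - y0) \<le> B * norm h" .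
    qed
    have "norm (\<Sum>i\<le>m. Acoef m i * Rm i h) \<le> (\<Sum>i\<le>m. norm (Acoef m i :: 'a) * (K * (B * norm h) ^ (m + 1)))"
    proof (rule order_trans[OF norm_sum sum_mono])
      fix i assume "i \<in> {..m}"
      hence "norm (Rm i h) \<le> K * (B * norm h) ^ (m + 1)" using Ri by simp
      thus "norm (Acoef m i * Rm i h) \<le> norm (Acoef m i :: 'a) * (K * (B * norm h) ^ (m + 1))"
        unfolding norm_mult by (rule mult_left_mono) simp
    qed
    also have "\<dots> = CA * K * B ^ (m + 1) * norm h ^ (m + 1)"
      unfolding CA_def sum_distrib_right by (rule sum.cong) (simp_all add: power_mult_distrib algebra_simps)
    finally have N: "norm (\<Sum>i\<le>m. Acoef m i * Rm i h) \<le> CA * K * B ^ (m + 1) * norm h ^ (m + 1)" .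
    have "norm (E h) = norm (\<Sum>i\<le>m. Acoef m i * Rm i h) / norm h ^ m"
      by (simp add: E_def norm_mult norm_divide norm_power)
    also have "\<dots> \<le> (CA * K * B ^ (m + 1) * norm h ^ (m + 1)) / norm h ^ m"
      by (rule divide_right_mono[OF N]) simp
    also have "\<dots> = CA * K * B ^ (m + 1) * norm h" using h by (simp add: field_simps)
    finally show ?thesis .
  qed
  have Elim: "(E \<longlongrightarrow> 0) (at 0)"
  proof (rule Lim_null_comparison)
    show "\<forall>\<^sub>F h in at 0. norm (E h) \<le> CA * K * B ^ (m + 1) * norm h"
      unfolding eventually_at using d Ebound by (auto simp: dist_norm)
    show "((\<lambda>h. CA * K * B ^ (m + 1) * norm h) \<longlongrightarrow> 0) (at 0)"
      by (rule tendsto_eq_intros tendsto_const tendsto_norm_zero tendsto_ident_at | simp)+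
  qed
  have lim: "((\<lambda>h. (1 / h ^ m) * (\<Sum>i\<le>m. Acoef m i * f (znode a (x0, y0) i h))) \<longlongrightarrow> Lim + 0) (at 0)"
    unfolding split by (intro tendsto_add Tlim Elim)
  have supp: "\<alpha> \<in> SS m" if "Lpoly a m \<alpha> \<noteq> 0" for \<alpha>
  proof -
    obtain p q where a: "\<alpha> = (p,q)" by (cases \<alpha>)
    have eq: "fact p * fact q * Lpoly a m (p,q) = (if p \<le> m then GG a m (m - p) q else 0)"
      by (rule Lpoly_GG) simp
    have "fact p * fact q * Lpoly a m (p,q) \<noteq> 0" using that a by simp
    hence "p \<le> m" "GG a m (m - p) q \<noteq> 0" using eq by (auto split: if_splits)
    hence "\<not> (m - p < 2 * q)" using GG_small by blast
    thus ?thesis using \<open>p \<le> m\<close> a by (auto simp: SS_def)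
  qed
  have "polyD (Lpoly a m) f (x0, y0) = (\<Sum>\<alpha>\<in>SS m. Lpoly a m \<alpha> * pderiv2 \<alpha> f (x0, y0))"
    unfolding polyD_def
    by (rule sum.mono_neutral_left) (use supp finite_SS in auto)
  also have "\<dots> = Lim"
    unfolding Lim_def
  proof (rule sum.cong[OF refl])
    fix \<alpha> assume "\<alpha> \<in> SS m"
    obtain p q where a: "\<alpha> = (p,q)" by (cases \<alpha>)
    have eq: "fact p * fact q * Lpoly a m (p,q) = (if p \<le> m then GG a m (m - p) q else 0)"
      by (rule Lpoly_GG) simp
    show "Lpoly a m \<alpha> * pderiv2 \<alpha> f (x0, y0) = c \<alpha> * (if fst \<alpha> \<le> m then GG a m (m - fst \<alpha>) (snd \<alpha>) else 0)"
      unfolding a pderiv_coeff using eq by (simp add: algebra_simps)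
  qed
  finally show ?thesis using lim by simp
qed

end

lemma main_generic:
  fixes f :: "'a::{real_normed_field,banach} \<times> 'a \<Rightarrow> 'a" and a :: "nat \<Rightarrow> 'a"
  assumes "analytic2_at f z0"
  shows "((\<lambda>h. (1 / h ^ m) * (\<Sum>i\<le>m. Acoef m i * f (znode a z0 i h))) \<longlongrightarrow> polyD (Lpoly a m) f z0) (at 0)"
proof -
  obtain r c where "r > 0" and H: "\<forall>x y. norm (x - fst z0) < r \<and> norm (y - snd z0) < r \<longrightarrow>
       (\<lambda>(i,j). c (i,j) * (x - fst z0) ^ i * (y - snd z0) ^ j) abs_summable_on UNIV \<and>
       ((\<lambda>(i,j). c (i,j) * (x - fst z0) ^ i * (y - snd z0) ^ j) has_sum f (x, y)) UNIV"
    using assms unfolding analytic2_at_def by blast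
  interpret an2 f "fst z0" "snd z0" r c
    by unfold_locales (use \<open>r > 0\<close> H in auto)
  show ?thesis using main_limit[of m a] by simp
qed



theorem theorem11:
  shows "(\<forall>(n::nat) (a::nat \<Rightarrow> real) (z0::real \<times> real) (f::real \<times> real \<Rightarrow> real) m.
            1 \<le> n \<and> analytic2_at f z0 \<and> m \<le> n \<longrightarrow>
            ((\<lambda>h. (1 / h ^ m) * (\<Sum>i\<le>m. Acoef m i * f (znode a z0 i h)))
               \<longlongrightarrow> polyD (Lpoly a m) f z0) (at 0))
       \<and> (\<forall>(n::nat) (a::nat \<Rightarrow> complex) (z0::complex \<times> complex) (f::complex \<times> complex \<Rightarrow> complex) m.
            1 \<le> n \<and> analytic2_at f z0 \<and> m \<le> n \<longrightarrow>
            ((\<lambda>h. (1 / h ^ m) * (\<Sum>i\<le>m. Acoef m i * f (znode a z0 i h)))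
               \<longlongrightarrow> polyD (Lpoly a m) f z0) (at 0))"
    using main_generic[where 'a=real] main_generic[where 'a=complex] by blast

end
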